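(* Let $0 < 1/r_1 \ll \tau, 1/K$ where $\tau<1$, $K\ge1$ and $1-\tau-7\tau^{1/4}/K>0$. If $\mathcal H$ is an $n$-vertex linear hypergraph in which every edge $e$ satisfies $|e|\ge r_1$, then there is a linear ordering $\preceq$ of the edges of $\mathcal H$ such that at least one of the following holds. (a) Every $e\in\mathcal H$ satisfies $d^{\preceq}(e)\le(1-\tau)n$. (b) There is a set $W\subseteq\mathcal H$ such that (W1) $\max_{e\in W}|e| \le (1+3\tau^{1/4}K^4)\min_{e\in W}|e|$ and (W2) $\mathrm{vol}(W) \ge \frac{(1-\tau-7\tau^{1/4}/K)^2}{1+3\tau^{1/4}K^4}$; moreover, if $e^*$ is the last edge of $W$ in $\preceq$, then (O1) every $f\in\mathcal H$ with $e^*\preceq f$ and $f\ne e^*$ satisfies $d^{\preceq}(f)\le(1-\tau)n$, and (O2) for all $e,f\in\mathcal H$ with $f\preceq e\preceq e^*$ we have $|f|\ge|e|$.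
   Context: A hypergraph has a finite vertex set and a set of nonempty edges; linear means any two distinct edges share at most one vertex. For an edge $e$, $N(e)$ is the set of edges $f\ne e$ with $f\cap e\ne\varnothing$. Given a linear ordering $\preceq$ of the edges (reflexive), $d^{\preceq}(e)$ is the number of $f\in N(e)$ with $f\preceq e$. The normalised volume of a set $W$ of edges of an $n$-vertex hypergraph is $\mathrm{vol}(W)=\sum_{e\in W}\binom{|e|}{2}/\binom n2$. Hierarchy: $0<1/r_1\ll\tau,1/K$ means the statement holds whenever $r_1$ is sufficiently large as a function of $\tau$ and $K$. *)

theory Defs
  imports Main "HOL-Library.Extended_Real"
begin

definition hypergraph :: "'a set \<Rightarrow> 'a set set \<Rightarrow> bool" where
  "hypergraph V E \<longleftrightarrow> finite V \<and> (\<forall>e\<in>E. e \<subseteq> V \<and> e \<noteq> {})"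

definition linear_hypergraph :: "'a set \<Rightarrow> 'a set set \<Rightarrow> bool" where
  "linear_hypergraph V E \<longleftrightarrow> hypergraph V E \<and>
     (\<forall>e\<in>E. \<forall>f\<in>E. e \<noteq> f \<longrightarrow> card (e \<inter> f) \<le> 1)"

definition nbhd :: "'a set set \<Rightarrow> 'a set \<Rightarrow> 'a set set" where
  "nbhd E e = {f \<in> E. f \<noteq> e \<and> f \<inter> e \<noteq> {}}"

text \<open>d^R(e) for a (reflexive) linear order R on the edges: (f,e) \<in> R means f \<preceq> e.\<close>
definition back_deg :: "'a set set \<Rightarrow> ('a set \<times> 'a set) set \<Rightarrow> 'a set \<Rightarrow> nat" where
  "back_deg E R e = card {f \<in> nbhd E e. (f, e) \<in> R}"

definition vol :: "nat \<Rightarrow> 'a set set \<Rightarrow> real" where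
  "vol n W = (\<Sum>e\<in>W. real (card e choose 2)) / real (n choose 2)"

end

theory Submission
  imports Defs
begin

definition ord_of :: "'b list \<Rightarrow> ('b \<times> 'b) set" where
  "ord_of xs = {(xs!i, xs!j) | i j. i \<le> j \<and> j < length xs}"

lemma ord_of_iff:
  assumes "distinct xs" "i < length xs" "j < length xs"
  shows "(xs!i, xs!j) \<in> ord_of xs \<longleftrightarrow> i \<le> j"
proof
  assume "(xs!i, xs!j) \<in> ord_of xs"
  then obtain i' j' where "xs!i = xs!i'" "xs!j = xs!j'" "i' \<le> j'" "j' < length xs"
    unfolding ord_of_def by auto
  then show "i \<le> j" using assms nth_eq_iff_index_eq by (metis le_less_trans)
next
  assume "i \<le> j" then show "(xs!i, xs!j) \<in> ord_of xs" using assms unfolding ord_of_def by auto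
qed

lemma ord_of_sub: "ord_of xs \<subseteq> set xs \<times> set xs"
  unfolding ord_of_def by auto

lemma linear_ord_of:
  assumes "distinct xs"
  shows "linear_order_on (set xs) (ord_of xs)"
proof -
  have refl: "refl_on (set xs) (ord_of xs)"
    unfolding refl_on_def ord_of_def
  proof
    fix x assume "x \<in> set xs"
    then obtain i where "i < length xs" "x = xs!i" by (auto simp: in_set_conv_nth)
    then show "(x,x) \<in> {(xs!i, xs!j) | i j. i \<le> j \<and> j < length xs}" by blast
  qed
  have tr: "trans (ord_of xs)"
  proof (rule transI)
    fix x y z assume a: "(x,y) \<in> ord_of xs" "(y,z) \<in> ord_of xs"
    from a(1) obtain i j where 1: "x = xs!i" "y = xs!j" "i \<le> j" "j < length xs" unfolding ord_of_def by auto
    from a(2) obtain j' l where 2: "y = xs!j'" "z = xs!l" "j' \<le> l" "l < length xs" unfolding ord_of_def by auto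
    have "j = j'" using 1 2 assms nth_eq_iff_index_eq by (metis le_less_trans)
    then have "i \<le> l" using 1 2 by auto
    then show "(x,z) \<in> ord_of xs" using 1 2 unfolding ord_of_def by blast
  qed
  have anti: "antisym (ord_of xs)"
  proof (rule antisymI)
    fix x y assume a: "(x,y) \<in> ord_of xs" "(y,x) \<in> ord_of xs"
    from a(1) obtain i j where 1: "x = xs!i" "y = xs!j" "i \<le> j" "j < length xs" unfolding ord_of_def by auto
    have "i < length xs" using 1 by auto
    then have "j \<le> i" using a(2) 1 ord_of_iff[OF assms] by auto
    then show "x = y" using 1 by auto
  qed
  have tot: "total_on (set xs) (ord_of xs)"
    unfolding total_on_def
  proof (intro ballI impI)
    fix x y assume "x \<in> set xs" "y \<in> set xs" "x \<noteq> y"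
    then obtain i j where "i < length xs" "j < length xs" "x = xs!i" "y = xs!j" by (auto simp: in_set_conv_nth)
    then show "(x, y) \<in> ord_of xs \<or> (y, x) \<in> ord_of xs" using ord_of_iff[OF assms] by (metis nat_le_linear)
  qed
  show ?thesis unfolding linear_order_on_def partial_order_on_def preorder_on_def
    using refl tr anti tot ord_of_sub[of xs] by auto
qed

lemma ord_of_before:
  assumes "distinct xs" "j < length xs"
  shows "{f. (f, xs!j) \<in> ord_of xs} = set (take (Suc j) xs)"
proof -
  have "{f. (f, xs!j) \<in> ord_of xs} = {xs!i | i. i \<le> j}"
  proof safe
    fix f assume "(f, xs!j) \<in> ord_of xs"
    then obtain i j' where "f = xs!i" "xs!j = xs!j'" "i \<le> j'" "j' < length xs" unfolding ord_of_def by auto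
    then show "\<exists>i. f = xs!i \<and> i \<le> j" using assms nth_eq_iff_index_eq by metis
  next
    fix i assume "i \<le> j" then show "(xs!i, xs!j) \<in> ord_of xs" using assms unfolding ord_of_def by auto
  qed
  also have "\<dots> = set (take (Suc j) xs)"
  proof safe
    fix i assume "i \<le> j"
    then have "take (Suc j) xs ! i = xs ! i" "i < length (take (Suc j) xs)" using assms by auto
    then show "xs!i \<in> set (take (Suc j) xs)" by (metis nth_mem)
  next
    fix x assume "x \<in> set (take (Suc j) xs)"
    then obtain i where "i < length (take (Suc j) xs)" "x = take (Suc j) xs ! i" by (auto simp: in_set_conv_nth)
    then show "\<exists>i. x = xs!i \<and> i \<le> j" by auto
  qed
  finally show ?thesis .
qed

lemma nbhd_remove: "nbhd (X - {g}) g = nbhd X g"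
  unfolding nbhd_def by auto

lemma nbhd_insert: "nbhd (insert g X) g = nbhd X g"
  unfolding nbhd_def by auto

lemma peel:
  fixes t :: real
  shows "finite F \<Longrightarrow> \<exists>C ps. C \<subseteq> F \<and> distinct ps \<and> set ps = F - C \<and>
     (\<forall>e\<in>C. t < real (card (nbhd C e))) \<and>
     (\<forall>i<length ps. real (card (nbhd (C \<union> set (take i ps)) (ps!i))) \<le> t)"
proof (induction "card F" arbitrary: F rule: less_induct)
  case less
  show ?case
  proof (cases "\<exists>g\<in>F. real (card (nbhd F g)) \<le> t")
    case False
    then show ?thesis
      by (rule_tac x=F in exI, rule_tac x="[]" in exI) auto
  next
    case True
    then obtain g where g: "g \<in> F" "real (card (nbhd F g)) \<le> t" by auto
    have "card (F - {g}) < card F" using g less.prems by (meson card_Diff1_less)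
    then obtain C ps where IH: "C \<subseteq> F - {g}" "distinct ps" "set ps = F - {g} - C"
      "\<forall>e\<in>C. t < real (card (nbhd C e))"
      "\<forall>i<length ps. real (card (nbhd (C \<union> set (take i ps)) (ps!i))) \<le> t"
      using less.hyps[of "F - {g}"] less.prems by auto
    have u: "C \<union> set ps = F - {g}" using IH by auto
    show ?thesis
    proof (rule exI[of _ C], rule exI[of _ "ps @ [g]"], intro conjI)
      show "C \<subseteq> F" using IH by auto
      show "distinct (ps @ [g])" using IH by auto
      show "set (ps @ [g]) = F - C" using IH g by auto
      show "\<forall>e\<in>C. t < real (card (nbhd C e))" using IH by auto
      show "\<forall>i<length (ps @ [g]). real (card (nbhd (C \<union> set (take i (ps @ [g]))) ((ps @ [g]) ! i))) \<le> t"
      proof (intro allI impI)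
        fix i assume i: "i < length (ps @ [g])"
        show "real (card (nbhd (C \<union> set (take i (ps @ [g]))) ((ps @ [g]) ! i))) \<le> t"
        proof (cases "i < length ps")
          case True
          then show ?thesis using IH(5) by (auto simp: nth_append)
        next
          case False
          then have "i = length ps" using i by auto
          then have "nbhd (C \<union> set (take i (ps @ [g]))) ((ps @ [g]) ! i) = nbhd (F - {g}) g"
            using u by auto
          then show ?thesis using g nbhd_remove by metis
        qed
      qed
    qed
  qed
qed

lemma assemble:
  fixes t :: real
  assumes fin: "finite E" and CE: "C \<subseteq> E" and dps: "distinct ps" and sps: "set ps = E - C"
    and good: "\<forall>i<length ps. real (card (nbhd (C \<union> set (take i ps)) (ps!i))) \<le> t"
  shows "\<exists>R. linear_order_on E R \<and> (\<forall>e\<in>E-C. real (back_deg E R e) \<le> t) \<and>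
     (C \<noteq> {} \<longrightarrow> (\<exists>es\<in>C. (\<forall>w\<in>C. (w,es)\<in>R) \<and> (\<forall>f\<in>E. (es,f)\<in>R \<and> f\<noteq>es \<longrightarrow> f \<notin> C) \<and>
        (\<forall>e\<in>E. \<forall>f\<in>E. (f,e)\<in>R \<and> (e,es)\<in>R \<longrightarrow> card f \<ge> card e)))"
proof -
  have "finite C" using fin CE finite_subset by auto
  then obtain l where l: "set l = C" "distinct l" using finite_distinct_list by auto
  define key where "key = (\<lambda>x::'a set. - int (card x))"
  define cs where "cs = sort_key key l"
  have cs: "set cs = C" "distinct cs" "sorted (map key cs)" using l unfolding cs_def
    by (auto simp: distinct_sort)
  define xs where "xs = cs @ ps"
  have dxs: "distinct xs" using cs dps sps unfolding xs_def by auto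
  have sxs: "set xs = E" using cs sps CE unfolding xs_def by auto
  define R where "R = ord_of xs"
  have lin: "linear_order_on E R" using linear_ord_of[OF dxs] sxs R_def by simp
  have bd: "back_deg E R (xs!j) = card (nbhd (set (take (Suc j) xs)) (xs!j))" if "j < length xs" for j
  proof -
    have "{f \<in> nbhd E (xs!j). (f, xs!j) \<in> R} = nbhd E (xs!j) \<inter> set (take (Suc j) xs)"
      using ord_of_before[OF dxs that] R_def by auto
    also have "\<dots> = nbhd (set (take (Suc j) xs)) (xs!j)"
      using sxs set_take_subset[of "Suc j" xs] unfolding nbhd_def by auto
    finally show ?thesis unfolding back_deg_def by simp
  qed
  have part1: "\<forall>e\<in>E-C. real (back_deg E R e) \<le> t"
  proof
    fix e assume "e \<in> E - C"
    then have "e \<in> set ps" using sps by simp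
    then obtain i where i: "i < length ps" "e = ps!i" by (auto simp: in_set_conv_nth)
    define j where "j = length cs + i"
    have j: "j < length xs" "xs!j = e" using i unfolding j_def xs_def by (auto simp: nth_append)
    have "take (Suc j) xs = cs @ take i ps @ [ps!i]" unfolding j_def xs_def
      using i by (simp add: take_Suc_conv_app_nth)
    then have "set (take (Suc j) xs) = insert e (C \<union> set (take i ps))" using cs(1) i(2) by simp
    then have "back_deg E R e = card (nbhd (insert e (C \<union> set (take i ps))) e)"
      using bd[OF j(1)] j(2) by simp
    also have "\<dots> = card (nbhd (C \<union> set (take i ps)) (ps!i))" unfolding i(2) by (simp only: nbhd_insert)
    finally have "back_deg E R e = card (nbhd (C \<union> set (take i ps)) (ps!i))" .
    then show "real (back_deg E R e) \<le> t" using good i by auto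
  qed
  have part2: "\<exists>es\<in>C. (\<forall>w\<in>C. (w,es)\<in>R) \<and> (\<forall>f\<in>E. (es,f)\<in>R \<and> f\<noteq>es \<longrightarrow> f \<notin> C) \<and>
        (\<forall>e\<in>E. \<forall>f\<in>E. (f,e)\<in>R \<and> (e,es)\<in>R \<longrightarrow> card f \<ge> card e)" if "C \<noteq> {}"
  proof -
    have lc: "cs \<noteq> []" using that cs(1) by auto
    define q where "q = length cs - 1"
    have q1: "q < length cs" using lc unfolding q_def by simp
    have q2: "q < length xs" using q1 unfolding xs_def by simp
    note q = q1 q2
    define es where "es = xs!q"
    have xq: "xs!q = cs!q" using q1 unfolding xs_def by (simp add: nth_append)
    have "cs!q \<in> C" using nth_mem[OF q1] cs(1) by simp
    then have esC: "es \<in> C" unfolding es_def xq .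
    have idx: "\<exists>i<length xs. x = xs!i" if "x \<in> E" for x
      using that sxs by (auto simp: in_set_conv_nth)
    have inC: "x \<in> C \<longleftrightarrow> i < length cs" if "i < length xs" "x = xs!i" for x i
    proof
      assume "x \<in> C"
      then obtain i' where i': "i' < length cs" "x = cs!i'" using cs(1) by (auto simp: in_set_conv_nth)
      then have a: "x = xs!i'" "i' < length xs" unfolding xs_def by (auto simp: nth_append)
      then have "xs!i = xs!i'" using that by simp
      then have "i = i'" using nth_eq_iff_index_eq[OF dxs that(1) a(2)] by blast
      then show "i < length cs" using i' by simp
    next
      assume "i < length cs"
      then show "x \<in> C" using that cs(1) unfolding xs_def by (auto simp: nth_append)
    qed
    have esq: "es = xs!q" by (simp add: es_def)
    show ?thesis
    proof (rule bexI[OF _ esC], intro conjI ballI impI)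
      fix w assume w: "w \<in> C"
      then obtain i where i: "i < length xs" "w = xs!i" using idx CE by blast
      have "i < length cs" using inC[OF i] w by blast
      then have "i \<le> q" unfolding q_def by linarith
      then show "(w, es) \<in> R" unfolding R_def esq i(2)
        using ord_of_iff[OF dxs i(1) q2] by blast
    next
      fix f assume f: "f \<in> E" "(es, f) \<in> R \<and> f \<noteq> es"
      then obtain i where i: "i < length xs" "f = xs!i" using idx by blast
      have "(xs!q, xs!i) \<in> ord_of xs" using f(2) unfolding R_def esq i(2) by blast
      then have "q \<le> i" using ord_of_iff[OF dxs q2 i(1)] by blast
      moreover have "i \<noteq> q" using f(2) i(2) esq by blast
      ultimately have "\<not> i < length cs" unfolding q_def by linarith
      then show "f \<notin> C" using inC[OF i] by blast
    next
      fix e f assume ef: "e \<in> E" "f \<in> E" "(f, e) \<in> R \<and> (e, es) \<in> R"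
      obtain i where i: "i < length xs" "f = xs!i" using idx ef(2) by blast
      obtain j where j: "j < length xs" "e = xs!j" using idx ef(1) by blast
      have "(xs!i, xs!j) \<in> ord_of xs" "(xs!j, xs!q) \<in> ord_of xs"
        using ef(3) unfolding R_def esq i(2) j(2) by blast+
      then have ij: "i \<le> j" "j \<le> q" using ord_of_iff[OF dxs i(1) j(1)] ord_of_iff[OF dxs j(1) q2] by blast+
      have jc: "j < length cs" using ij q1 by linarith
      have ic: "i < length cs" using ij q1 by linarith
      have "map key cs ! i \<le> map key cs ! j"
        using sorted_nth_mono[OF cs(3) ij(1)] jc by simp
      then have "key (cs!i) \<le> key (cs!j)" using ic jc by simp
      moreover have "xs!i = cs!i" "xs!j = cs!j" using ic jc unfolding xs_def
        by (simp_all add: nth_append)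
      ultimately show "card f \<ge> card e" using i(2) j(2) unfolding key_def by simp
    qed
  qed
  show ?thesis
    apply (rule exI[of _ R])
    apply (intro conjI impI)
      apply (rule lin)
     apply (rule part1)
    apply (erule part2)
    done
qed

definition Dg :: "'a set set \<Rightarrow> 'a \<Rightarrow> 'a set set" where
  "Dg X w = {f \<in> X. w \<in> f}"

lemma lin_fin:
  assumes "linear_hypergraph V E"
  shows "finite V" "finite E" "\<And>f. f \<in> E \<Longrightarrow> f \<subseteq> V" "\<And>f. f \<in> E \<Longrightarrow> finite f"
    "\<And>e f. e \<in> E \<Longrightarrow> f \<in> E \<Longrightarrow> e \<noteq> f \<Longrightarrow> card (e \<inter> f) \<le> 1"
proof -
  show fv: "finite V" using assms unfolding linear_hypergraph_def hypergraph_def by auto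
  show sub: "\<And>f. f \<in> E \<Longrightarrow> f \<subseteq> V" using assms unfolding linear_hypergraph_def hypergraph_def by auto
  show "finite E" using sub fv by (meson Pow_iff finite_Pow_iff finite_subset subsetI)
  show "\<And>f. f \<in> E \<Longrightarrow> finite f" using sub fv finite_subset by metis
  show "\<And>e f. e \<in> E \<Longrightarrow> f \<in> E \<Longrightarrow> e \<noteq> f \<Longrightarrow> card (e \<inter> f) \<le> 1"
    using assms unfolding linear_hypergraph_def by auto
qed

lemma lin_two:
  assumes "linear_hypergraph V E" "e \<in> E" "f \<in> E" "e \<noteq> f" "x \<in> e" "x \<in> f" "y \<in> e" "y \<in> f"
  shows "x = y"
proof (rule ccontr)
  assume "x \<noteq> y"
  have "finite (e \<inter> f)" using lin_fin(4)[OF assms(1,2)] by auto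
  then have "card {x,y} \<le> card (e \<inter> f)" using assms by (intro card_mono) auto
  then show False using \<open>x \<noteq> y\<close> lin_fin(5)[OF assms(1-4)] by auto
qed

lemma L1:
  assumes lin: "linear_hypergraph V E" and CE: "C \<subseteq> E" and w: "w \<in> V"
  shows "(\<Sum>f\<in>Dg C w. card f - 1) \<le> card V - 1"
proof -
  have finC: "finite (Dg C w)" using lin_fin(2)[OF lin] CE unfolding Dg_def by (auto intro: finite_subset)
  have disj: "\<forall>f\<in>Dg C w. \<forall>g\<in>Dg C w. f \<noteq> g \<longrightarrow> (f - {w}) \<inter> (g - {w}) = {}"
    using lin_two[OF lin] CE unfolding Dg_def by blast
  have fin: "\<forall>f\<in>Dg C w. finite (f - {w})" using lin_fin(4)[OF lin] CE unfolding Dg_def by auto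
  have "(\<Sum>f\<in>Dg C w. card f - 1) = (\<Sum>f\<in>Dg C w. card (f - {w}))"
    by (rule sum.cong) (auto simp: Dg_def)
  also have "\<dots> = card (\<Union>f\<in>Dg C w. f - {w})" using card_UN_disjoint[OF finC fin disj] by simp
  also have "\<dots> \<le> card (V - {w})"
    using lin_fin(1,3)[OF lin] CE unfolding Dg_def by (intro card_mono) auto
  also have "\<dots> = card V - 1" using w lin_fin(1)[OF lin] by simp
  finally show ?thesis .
qed

lemma L2:
  assumes lin: "linear_hypergraph V E" and CE: "C \<subseteq> E" and e: "e \<in> C"
  shows "card (nbhd C e) = (\<Sum>w\<in>e. card (Dg C w) - 1)"
proof -
  have finE: "finite E" using lin_fin(2)[OF lin] .
  have fine: "finite e" using lin_fin(4)[OF lin] CE e by auto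
  have eq: "nbhd C e = (\<Union>w\<in>e. Dg C w - {e})" unfolding nbhd_def Dg_def by auto
  have fin: "\<forall>w\<in>e. finite (Dg C w - {e})" using finE CE unfolding Dg_def by (auto intro: finite_subset)
  have disj: "\<forall>w\<in>e. \<forall>w'\<in>e. w \<noteq> w' \<longrightarrow> (Dg C w - {e}) \<inter> (Dg C w' - {e}) = {}"
    using lin_two[OF lin] CE e unfolding Dg_def by blast
  have "card (nbhd C e) = (\<Sum>w\<in>e. card (Dg C w - {e}))"
    unfolding eq using card_UN_disjoint[OF fine fin disj] by simp
  also have "\<dots> = (\<Sum>w\<in>e. card (Dg C w) - 1)"
    by (rule sum.cong) (use e in \<open>auto simp: Dg_def\<close>)
  finally show ?thesis .
qed

lemma L2r:
  assumes lin: "linear_hypergraph V E" and CE: "C \<subseteq> E" and e: "e \<in> C"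
  shows "real (card (nbhd C e)) = (\<Sum>w\<in>e. real (card (Dg C w)) - 1)"
proof -
  have "\<forall>w\<in>e. card (Dg C w) \<ge> 1"
  proof
    fix w assume "w \<in> e"
    have "finite (Dg C w)" using lin_fin(2)[OF lin] CE unfolding Dg_def by (auto intro: finite_subset)
    moreover have "e \<in> Dg C w" using \<open>w \<in> e\<close> e unfolding Dg_def by auto
    ultimately show "card (Dg C w) \<ge> 1" by (metis One_nat_def Suc_leI card_gt_0_iff empty_iff)
  qed
  then show ?thesis unfolding L2[OF assms] by (simp add: of_nat_diff)
qed

lemma L3:
  assumes lin: "linear_hypergraph V E" and XE: "X \<subseteq> E"
  shows "(\<Sum>f\<in>X. real (card f) * h f) = (\<Sum>w\<in>V. \<Sum>f\<in>Dg X w. h f)"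
proof -
  have finX: "finite X" using lin_fin(2)[OF lin] XE finite_subset by auto
  have finV: "finite V" using lin_fin(1)[OF lin] .
  have "(\<Sum>f\<in>X. real (card f) * h f) = (\<Sum>f\<in>X. \<Sum>w\<in>{w\<in>V. w \<in> f}. h f)"
  proof (rule sum.cong)
    fix f assume "f \<in> X"
    then have "{w\<in>V. w \<in> f} = f" using lin_fin(3)[OF lin] XE by auto
    then show "real (card f) * h f = (\<Sum>w\<in>{w\<in>V. w \<in> f}. h f)" by simp
  qed simp
  also have "\<dots> = (\<Sum>w\<in>V. \<Sum>f\<in>{f\<in>X. w \<in> f}. h f)"
    by (rule sum.swap_restrict[OF finX finV])
  finally show ?thesis unfolding Dg_def .
qed

lemma vertex_bound:
  fixes \<delta> :: real
  assumes lin: "linear_hypergraph V E" and CE: "C \<subseteq> E" and d: "\<delta> > 0" and k1: "k \<ge> 1"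
    and minC: "\<forall>f\<in>C. card f \<ge> k" and w: "w \<in> V"
    and Wdef: "W = {f\<in>C. real (card f) \<le> (1+\<delta>)*real k}"
  shows "\<delta> * (\<Sum>f\<in>Dg W w. real (card f) - 1) \<ge> (1+\<delta>)*(real k - 1)*real (card (Dg C w)) - (real (card V) - 1)"
proof -
  define A where "A = Dg W w"
  define B where "B = Dg (C - W) w"
  have finC: "finite (Dg C w)" using lin_fin(2)[OF lin] CE unfolding Dg_def by (auto intro: finite_subset)
  have un: "Dg C w = A \<union> B" "A \<inter> B = {}" unfolding A_def B_def Dg_def Wdef by auto
  have finA: "finite A" "finite B" using finC un by auto
  define X where "X = (\<Sum>f\<in>A. real (card f) - 1)"
  define Y where "Y = (\<Sum>f\<in>B. real (card f) - 1)"
  have nV: "card V \<ge> 1" using w lin_fin(1)[OF lin] by (metis One_nat_def Suc_leI card_gt_0_iff empty_iff)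
  have "(\<Sum>f\<in>Dg C w. card f - 1) \<le> card V - 1" by (rule L1[OF lin CE w])
  then have "real (\<Sum>f\<in>Dg C w. card f - 1) \<le> real (card V - 1)" by linarith
  moreover have "real (\<Sum>f\<in>Dg C w. card f - 1) = (\<Sum>f\<in>Dg C w. real (card f) - 1)"
    unfolding of_nat_sum
  proof (rule sum.cong)
    fix f assume "f \<in> Dg C w"
    then have "card f \<ge> 1" using minC k1 unfolding Dg_def by auto
    then show "real (card f - 1) = real (card f) - 1" by (simp add: of_nat_diff)
  qed simp
  moreover have "real (card V - 1) = real (card V) - 1" using nV by (simp add: of_nat_diff)
  moreover have "(\<Sum>f\<in>Dg C w. real (card f) - 1) = X + Y"
    unfolding X_def Y_def un(1) by (rule sum.union_disjoint[OF finA un(2)])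
  ultimately have XY: "X + Y \<le> real (card V) - 1" by linarith
  have XA: "X \<ge> real (card A) * (real k - 1)"
    unfolding X_def
  proof (rule sum_bounded_below)
    fix f assume "f \<in> A"
    then show "real k - 1 \<le> real (card f) - 1" using minC unfolding A_def Dg_def Wdef by auto
  qed
  have YB: "Y \<ge> real (card B) * ((1+\<delta>)*(real k - 1))"
    unfolding Y_def
  proof (rule sum_bounded_below)
    fix f assume "f \<in> B"
    then have "real (card f) > (1+\<delta>)*real k" unfolding B_def Dg_def Wdef by auto
    then show "(1+\<delta>)*(real k - 1) \<le> real (card f) - 1" using d by (simp add: algebra_simps)
  qed
  have cC: "real (card (Dg C w)) = real (card A) + real (card B)"
    unfolding un(1) using card_Un_disjoint[OF finA un(2)] by simp
  have "(1+\<delta>) * (real (card A) * (real k - 1)) \<le> (1+\<delta>) * X"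
    using XA d by (intro mult_left_mono) auto
  then have "(1+\<delta>)*(real k - 1)*real (card (Dg C w)) \<le> (1+\<delta>)*X + Y"
    using YB unfolding cC by (simp add: algebra_simps)
  then show ?thesis using XY unfolding A_def[symmetric] X_def[symmetric] by (simp add: algebra_simps)
qed

lemma M2:
  fixes \<delta> :: real
  assumes lin: "linear_hypergraph V E" and CE: "C \<subseteq> E" and d: "\<delta> > 0" and k1: "k \<ge> 1"
    and minC: "\<forall>f\<in>C. card f \<ge> k"
    and Wdef: "W = {f\<in>C. real (card f) \<le> (1+\<delta>)*real k}"
  shows "\<delta> * (\<Sum>f\<in>W. real (card f) * (real (card f) - 1)) \<ge>
     (1+\<delta>)*(real k - 1)*(\<Sum>w\<in>V. real (card (Dg C w))) - real (card V) * (real (card V) - 1)"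
proof -
  have WE: "W \<subseteq> E" using CE Wdef by auto
  have "(\<Sum>f\<in>W. real (card f) * (real (card f) - 1)) = (\<Sum>w\<in>V. \<Sum>f\<in>Dg W w. real (card f) - 1)"
    by (rule L3[OF lin WE])
  then have "\<delta> * (\<Sum>f\<in>W. real (card f) * (real (card f) - 1)) = (\<Sum>w\<in>V. \<delta> * (\<Sum>f\<in>Dg W w. real (card f) - 1))"
    by (simp add: sum_distrib_left)
  also have "\<dots> \<ge> (\<Sum>w\<in>V. (1+\<delta>)*(real k - 1)*real (card (Dg C w)) - (real (card V) - 1))"
    by (rule sum_mono, rule vertex_bound[OF lin CE d k1 minC _ Wdef])
  moreover have "(\<Sum>w\<in>V. (1+\<delta>)*(real k - 1)*real (card (Dg C w)) - (real (card V) - 1)) =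
     (1+\<delta>)*(real k - 1)*(\<Sum>w\<in>V. real (card (Dg C w))) - real (card V) * (real (card V) - 1)"
    by (simp add: sum_subtractf sum_distrib_left)
  ultimately show ?thesis by linarith
qed

lemma M1:
  fixes \<tau> :: real
  assumes lin: "linear_hypergraph V E" and CE: "C \<subseteq> E" and es: "es \<in> C"
    and minC: "\<forall>f\<in>C. card es \<le> card f"
    and core: "\<forall>e\<in>C. (1-\<tau>)*real (card V) < real (card (nbhd C e))"
    and t0: "0 \<le> \<tau>" "\<tau> < 1" and kt: "(real (card es) - 1)*(1-\<tau>) \<ge> 1"
  shows "(real (card es) - 1) * (\<Sum>w\<in>V. real (card (Dg C w))) \<ge>
     real (card V) * (real (card V) - 1) * ((1-\<tau>)^2 - 2/real (card es))"
proof -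
  define n where "n = real (card V)"
  define k where "k = real (card es)"
  define t where "t = (1-\<tau>)*n"
  define S where "S = (\<Sum>w\<in>V. real (card (Dg C w)))"
  have finV: "finite V" using lin_fin(1)[OF lin] .
  have esE: "es \<in> E" using es CE by auto
  have esV: "es \<subseteq> V" using lin_fin(3)[OF lin esE] .
  have fines: "finite es" using lin_fin(4)[OF lin esE] .
  have k2: "k \<ge> 2" unfolding k_def
    proof (rule ccontr)
      assume "\<not> 2 \<le> real (card es)"
      then have "card es \<le> 1" by linarith
      then have "(real (card es) - 1) \<le> 0" by simp
      then have "(real (card es) - 1)*(1-\<tau>) \<le> 0" using t0 by (simp add: mult_nonpos_nonneg)
      then show False using kt by linarith
    qed
  have finDg: "\<And>w. finite (Dg C w)" using lin_fin(2)[OF lin] CE unfolding Dg_def by (auto intro: finite_subset)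
  have "\<exists>u\<in>es. real (card (Dg C u)) - 1 > t / k"
  proof (rule ccontr)
    assume "\<not> ?thesis"
    then have "\<forall>u\<in>es. real (card (Dg C u)) - 1 \<le> t / k" by auto
    then have "(\<Sum>w\<in>es. real (card (Dg C w)) - 1) \<le> (\<Sum>w\<in>es. t / k)" by (intro sum_mono) auto
    also have "\<dots> = t" using k2 unfolding k_def by simp
    finally show False using L2r[OF lin CE es] core es unfolding t_def n_def by auto
  qed
  then obtain u where u: "u \<in> es" "real (card (Dg C u)) - 1 > t / k" by auto
  define m where "m = real (card (Dg C u)) - 1"
  define Fu where "Fu = Dg C u - {es}"
  have esDu: "es \<in> Dg C u" using u es unfolding Dg_def by auto
  have cpos: "card (Dg C u) \<ge> 1" using esDu finDg[of u]
    by (metis One_nat_def Suc_leI card_gt_0_iff empty_iff)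
  have cFu: "real (card Fu) = m" unfolding Fu_def m_def using esDu finDg[of u] cpos
    by (simp add: card_Diff_singleton of_nat_diff)
  have finFu: "finite Fu" unfolding Fu_def using finDg by auto
  have st3: "(\<Sum>w\<in>f - {u}. real (card (Dg C w))) \<ge> t - m" if f: "f \<in> Fu" for f
  proof -
    have fC: "f \<in> C" "u \<in> f" using f unfolding Fu_def Dg_def by auto
    have finf: "finite f" using lin_fin(4)[OF lin] fC CE by auto
    have "(\<Sum>w\<in>f. real (card (Dg C w)) - 1) > t"
      using L2r[OF lin CE fC(1)] core fC unfolding t_def n_def by auto
    moreover have "(\<Sum>w\<in>f. real (card (Dg C w)) - 1) = (real (card (Dg C u)) - 1) + (\<Sum>w\<in>f - {u}. real (card (Dg C w)) - 1)"
      using sum.remove[OF finf fC(2)] by simp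
    moreover have "(\<Sum>w\<in>f - {u}. real (card (Dg C w)) - 1) \<le> (\<Sum>w\<in>f - {u}. real (card (Dg C w)))"
      by (rule sum_mono) simp
    ultimately show ?thesis unfolding m_def by linarith
  qed
  have disj: "\<forall>f\<in>Fu. \<forall>g\<in>Fu. f \<noteq> g \<longrightarrow> (f - {u}) \<inter> (g - {u}) = {}"
    using lin_two[OF lin] CE unfolding Fu_def Dg_def by blast
  have finfu: "\<forall>f\<in>Fu. finite (f - {u})" using lin_fin(4)[OF lin] CE unfolding Fu_def Dg_def by auto
  have a1: "S \<ge> (\<Sum>w\<in>(\<Union>f\<in>Fu. f - {u}). real (card (Dg C w)))"
    unfolding S_def
    by (rule sum_mono2[OF finV]) (use lin_fin(3)[OF lin] CE in \<open>auto simp: Fu_def Dg_def\<close>)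
  have a2: "(\<Sum>w\<in>(\<Union>f\<in>Fu. f - {u}). real (card (Dg C w))) = (\<Sum>f\<in>Fu. \<Sum>w\<in>f - {u}. real (card (Dg C w)))"
    by (rule sum.UNION_disjoint[OF finFu finfu disj])
  have a3: "(\<Sum>f\<in>Fu. \<Sum>w\<in>f - {u}. real (card (Dg C w))) \<ge> real (card Fu) * (t - m)"
    by (rule sum_bounded_below, rule st3)
  have S1: "S \<ge> m * (t - m)" using a1 a2 a3 cFu by simp
  have uV: "u \<in> V" using u esV by auto
  have "(\<Sum>f\<in>Dg C u. card f - 1) \<le> card V - 1" by (rule L1[OF lin CE uV])
  moreover have "(\<Sum>f\<in>Dg C u. card es - 1) \<le> (\<Sum>f\<in>Dg C u. card f - 1)"
    using minC unfolding Dg_def by (intro sum_mono) (auto simp: diff_le_mono)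
  moreover have "(\<Sum>f\<in>Dg C u. card es - 1) = card (Dg C u) * (card es - 1)" by simp
  ultimately have "card (Dg C u) * (card es - 1) \<le> card V - 1" by linarith
  then have "real (card (Dg C u) * (card es - 1)) \<le> real (card V - 1)" by linarith
  moreover have "card V \<ge> 1" using uV finV by (metis One_nat_def Suc_leI card_gt_0_iff empty_iff)
  moreover have "card es \<ge> 1" using k2 unfolding k_def by linarith
  ultimately have "(m + 1) * (k - 1) \<le> n - 1" unfolding m_def k_def n_def by (simp add: of_nat_diff)
  then have m6: "m * (k - 1) \<le> n - 1" using k2 by (simp add: algebra_simps)
  have m0: "m > t / k" using u unfolding m_def by simp
  have tk0: "t / k \<ge> 0" unfolding t_def using t0 k2 by (simp add: n_def)
  have mpos: "m \<ge> 0" using m0 tk0 by linarith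
  have "(k - 1) * S \<ge> (k - 1) * (m * (t - m))" using S1 k2 by (intro mult_left_mono) auto
  moreover have "(k - 1) * (m * (t - m)) = m * ((k - 1) * t) - m * (m * (k - 1))" by (simp add: algebra_simps)
  moreover have "m * (m * (k - 1)) \<le> m * (n - 1)" using m6 mpos by (intro mult_left_mono)
  ultimately have s7: "(k - 1) * S \<ge> m * ((k - 1) * t - (n - 1))" by (simp add: algebra_simps)
  define Q where "Q = (k - 1) * (1 - \<tau>) - 1"
  have Q0: "Q \<ge> 0" using kt unfolding Q_def k_def by simp
  have n1: "n \<ge> 1" using \<open>card V \<ge> 1\<close> unfolding n_def by simp
  have "(k - 1) * t - (n - 1) = n * Q + 1" unfolding t_def Q_def by (simp add: algebra_simps)
  also have "\<dots> \<ge> (n - 1) * Q" using Q0 n1 by (simp add: algebra_simps mult_left_mono)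
  finally have q7: "(k - 1) * t - (n - 1) \<ge> (n - 1) * Q" .
  have b1: "m * ((k - 1) * t - (n - 1)) \<ge> (t / k) * ((n - 1) * Q)"
    using q7 m0 tk0 Q0 n1 by (intro mult_mono) auto
  have b2: "(t / k) * ((n - 1) * Q) = n * (n - 1) * ((1 - \<tau>) * Q / k)" unfolding t_def by simp
  have b3: "(1 - \<tau>) * Q / k = (1-\<tau>)^2 - ((1-\<tau>)^2 + (1-\<tau>)) / k"
    using k2 unfolding Q_def by (simp add: field_simps power2_eq_square)
  have b4: "(1-\<tau>)^2 - ((1-\<tau>)^2 + (1-\<tau>)) / k \<ge> (1-\<tau>)^2 - 2 / k"
  proof -
    have "(1-\<tau>)^2 \<le> 1" using t0 by (simp add: power_le_one)
    then have "((1-\<tau>)^2 + (1-\<tau>)) \<le> 2" using t0 by linarith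
    then have "((1-\<tau>)^2 + (1-\<tau>)) / k \<le> 2 / k" using k2 by (simp add: divide_right_mono)
    then show ?thesis by linarith
  qed
  have b5: "n * (n - 1) * ((1 - \<tau>) * Q / k) \<ge> n * (n - 1) * ((1-\<tau>)^2 - 2 / k)"
    using n1 b3 b4 by (intro mult_left_mono) auto
  have "(k - 1) * S \<ge> n * (n - 1) * ((1-\<tau>)^2 - 2 / k)" using s7 b1 b2 b5 by linarith
  then show ?thesis unfolding S_def k_def n_def .
qed

lemma sigma_facts:
  fixes \<tau> :: real
  assumes "0 < \<tau>" "\<tau> < 1"
  shows "\<tau> powr (1/4) > 0" "(\<tau> powr (1/4))^4 = \<tau>" "\<tau> powr (1/4) < 1"
proof -
  show p: "\<tau> powr (1/4) > 0" using assms by simp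
  have "(\<tau> powr (1/4))^4 = \<tau> powr ((1/4) * 4)"
    using assms by (simp add: powr_power)
  then show e: "(\<tau> powr (1/4))^4 = \<tau>" using assms by simp
  show "\<tau> powr (1/4) < 1"
  proof (rule ccontr)
    assume "\<not> \<tau> powr (1/4) < 1"
    then have "1 \<le> (\<tau> powr (1/4))^4" by (simp add: one_le_power)
    then show False using e assms by simp
  qed
qed

lemma g_pos:
  fixes \<sigma> K :: real
  assumes s0: "0 < \<sigma>" and s1: "\<sigma> < 1" and K1: "K \<ge> 1"
    and pb: "1 - \<sigma>^4 - 7*\<sigma>/K > 0"
  defines "p \<equiv> 1 - \<sigma>^4" and "\<delta> \<equiv> 3*\<sigma>*K^4" and "b \<equiv> 7*\<sigma>/K"
  shows "(1+\<delta>)^2 * p^2 - (1+\<delta>) - \<delta> * (p - b)^2 > 0"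
proof -
  have K0: "K > 0" using K1 by simp
  have K4: "K^4 = K*(K*(K*K))" by (simp add: eval_nat_numeral)
  have b0: "b > 0" unfolding b_def using s0 K0 by simp
  have pbb: "p > b" using pb unfolding p_def b_def by simp
  have d0: "\<delta> > 0" unfolding \<delta>_def using s0 K0 by simp
  have E1: "(1+\<delta>)^2 * p^2 - (1+\<delta>) - \<delta> * (p - b)^2 = \<delta>*(\<delta>*p^2) + \<delta>*(b*(2*p-b)) - (1-p^2)*(1+\<delta>)"
    by (simp add: algebra_simps power2_eq_square)
  have s4: "\<sigma>^4 \<le> \<sigma>^3" using s0 s1 by (simp add: power_decreasing)
  have E2: "1 - p^2 \<le> 2*\<sigma>^4" unfolding p_def by (simp add: algebra_simps power2_eq_square)
  have E3: "b*(2*p-b) \<ge> b*p" using b0 pbb by (intro mult_left_mono) auto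
  have E4: "K*p > 7*\<sigma>" using pbb K0 unfolding b_def by (simp add: field_simps)
  have Kp0: "K*p > 0" using E4 s0 by linarith
  have KK: "K^2 \<ge> 1" using K1 by (simp add: one_le_power)
  have E5: "\<delta>*p^2 > 147*\<sigma>^3"
  proof -
    have "(K*p)^2 > (7*\<sigma>)^2" using E4 s0 by (intro power_strict_mono) auto
    then have "(K*p)^2 > 49*\<sigma>^2" by (simp add: power_mult_distrib)
    moreover have "K^2 * (K*p)^2 \<ge> (K*p)^2" using KK by (simp add: mult_le_cancel_right1)
    ultimately have "K^2 * (K*p)^2 > 49*\<sigma>^2" by linarith
    then have "3*\<sigma>*(K^2 * (K*p)^2) > 3*\<sigma>*(49*\<sigma>^2)" using s0 by (intro mult_strict_left_mono) auto
    moreover have "\<delta>*p^2 = 3*\<sigma>*(K^2 * (K*p)^2)" unfolding \<delta>_def K4 by (simp add: power_mult_distrib power2_eq_square algebra_simps)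
    moreover have "3*\<sigma>*(49*\<sigma>^2) = 147*\<sigma>^3" by (simp add: power2_eq_square power3_eq_cube)
    ultimately show ?thesis by linarith
  qed
  have E6: "\<delta>*(b*p) > 147*\<sigma>^3"
  proof -
    have "\<delta>*(b*p) = 21*\<sigma>^2*(K^2*(K*p))" unfolding \<delta>_def b_def K4 using K0
      by (simp add: power2_eq_square field_simps)
    moreover have "K^2*(K*p) \<ge> K*p" using KK Kp0 by (simp add: mult_le_cancel_right1)
    then have "K^2*(K*p) > 7*\<sigma>" using E4 by linarith
    then have "21*\<sigma>^2*(K^2*(K*p)) > 21*\<sigma>^2*(7*\<sigma>)" using s0 by (intro mult_strict_left_mono) auto
    moreover have "21*\<sigma>^2*(7*\<sigma>) = 147*\<sigma>^3" by (simp add: power2_eq_square power3_eq_cube)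
    ultimately show ?thesis by linarith
  qed
  have "\<delta>*(\<delta>*p^2) \<ge> \<delta>*(147*\<sigma>^3)" using E5 d0 by (simp add: mult_left_mono)
  moreover have "\<delta>*(b*(2*p-b)) \<ge> \<delta>*(b*p)" by (rule mult_left_mono[OF E3]) (use d0 in auto)
  moreover have "(1-p^2)*(1+\<delta>) \<le> (2*\<sigma>^4)*(1+\<delta>)" by (rule mult_right_mono[OF E2]) (use d0 in auto)
  moreover have "\<delta>*(2*\<sigma>^4) \<le> \<delta>*(147*\<sigma>^3)" proof -
    have "\<sigma>^3 \<ge> 0" using s0 by simp
    then have "2*\<sigma>^4 \<le> 147*\<sigma>^3" using s4 by linarith
    then show ?thesis using d0 by (simp add: mult_left_mono)
  qed
  moreover have "(2*\<sigma>^4)*(1+\<delta>) = 2*\<sigma>^4 + \<delta>*(2*\<sigma>^4)" by (simp add: algebra_simps)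
  moreover have "2*\<sigma>^4 \<le> 147*\<sigma>^3"
  proof -
    have "\<sigma>^3 > 0" using s0 by simp
    then show ?thesis using s4 by linarith
  qed
  ultimately show ?thesis unfolding E1 using E6 by linarith
qed

lemma choose2_real: "real (x choose 2) = real x * (real x - 1) / 2"
proof (induction x)
  case 0 then show ?case by simp
next
  case (Suc x)
  have "Suc x choose 2 = x + (x choose 2)" by (simp add: numeral_2_eq_2)
  then show ?case using Suc by (simp add: field_simps)
qed

theorem lemma6p2:
  fixes \<tau> K :: real
  assumes "0 < \<tau>" "\<tau> < 1" "K \<ge> 1" "1 - \<tau> - 7 * \<tau> powr (1/4) / K > 0"
  shows "\<exists>r0::nat. \<forall>r1::nat. r1 \<ge> r0 \<longrightarrow>
    (\<forall>(V::'a set) E. linear_hypergraph V E \<longrightarrow> (\<forall>e\<in>E. card e \<ge> r1) \<longrightarrow>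
      (\<exists>R. linear_order_on E R \<and>
        ((\<forall>e\<in>E. real (back_deg E R e) \<le> (1 - \<tau>) * real (card V)) \<or>
         (\<exists>W. W \<subseteq> E \<and> W \<noteq> {} \<and>
            real (Max (card ` W)) \<le> (1 + 3 * \<tau> powr (1/4) * K ^ 4) * real (Min (card ` W)) \<and>
            vol (card V) W \<ge> (1 - \<tau> - 7 * \<tau> powr (1/4) / K)\<^sup>2 / (1 + 3 * \<tau> powr (1/4) * K ^ 4) \<and>
            (\<exists>estar\<in>W. (\<forall>w\<in>W. (w, estar) \<in> R) \<and>
              (\<forall>f\<in>E. (estar, f) \<in> R \<and> f \<noteq> estar \<longrightarrow>
                  real (back_deg E R f) \<le> (1 - \<tau>) * real (card V)) \<and>
              (\<forall>e\<in>E. \<forall>f\<in>E. (f, e) \<in> R \<and> (e, estar) \<in> R \<longrightarrow> card f \<ge> card e))))))"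
proof -
  define \<sigma> where "\<sigma> = \<tau> powr (1/4)"
  have \<sigma>: "\<sigma> > 0" "\<sigma>^4 = \<tau>" "\<sigma> < 1" using sigma_facts[OF assms(1,2)] unfolding \<sigma>_def by auto
  define \<delta> where "\<delta> = 3 * \<sigma> * K ^ 4"
  define c where "c = (1 - \<tau> - 7 * \<sigma> / K)\<^sup>2"
  have K0: "K > 0" using assms(3) by simp
  have d0: "\<delta> > 0" unfolding \<delta>_def using \<sigma>(1) K0 by simp
  define g where "g = (1+\<delta>)^2 * (1-\<tau>)^2 - (1+\<delta>) - \<delta> * c"
  have g0: "g > 0"
  proof -
    have "1 - \<sigma>^4 - 7*\<sigma>/K > 0" using assms(4) \<sigma>(2) unfolding \<sigma>_def by simp
    from g_pos[OF \<sigma>(1) \<sigma>(3) assms(3) this] show ?thesis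
      unfolding g_def c_def \<delta>_def \<sigma>(2) by simp
  qed
  define r0 where "r0 = nat \<lceil>1 + 1/(1-\<tau>) + 2*(1+\<delta>)^2/g\<rceil>"
  show ?thesis
    unfolding \<sigma>_def[symmetric] \<delta>_def[symmetric] c_def[symmetric]
  proof (rule exI[of _ r0], intro allI impI)
    fix r1 :: nat and V :: "'a set" and E
    assume r1: "r0 \<le> r1" and lin: "linear_hypergraph V E" and big: "\<forall>e\<in>E. r1 \<le> card e"
    define n where "n = card V"
    define t where "t = (1-\<tau>)*real n"
    have finE: "finite E" using lin_fin(2)[OF lin] .
    from peel[OF finE, of t] obtain C where "\<exists>ps. C \<subseteq> E \<and> distinct ps \<and> set ps = E - C \<and>
      (\<forall>e\<in>C. t < real (card (nbhd C e))) \<and>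
      (\<forall>i<length ps. real (card (nbhd (C \<union> set (take i ps)) (ps!i))) \<le> t)" ..
    then obtain ps where P0: "C \<subseteq> E \<and> distinct ps \<and> set ps = E - C \<and>
      (\<forall>e\<in>C. t < real (card (nbhd C e))) \<and>
      (\<forall>i<length ps. real (card (nbhd (C \<union> set (take i ps)) (ps!i))) \<le> t)" ..
    have P: "C \<subseteq> E" "distinct ps" "set ps = E - C"
      "\<forall>e\<in>C. t < real (card (nbhd C e))"
      "\<forall>i<length ps. real (card (nbhd (C \<union> set (take i ps)) (ps!i))) \<le> t"
      using P0 by simp_all
    from assemble[OF finE P(1) P(2) P(3) P(5)] obtain R where R0: "linear_order_on E R \<and> (\<forall>e\<in>E-C. real (back_deg E R e) \<le> t) \<and>
      (C \<noteq> {} \<longrightarrow> (\<exists>es\<in>C. (\<forall>w\<in>C. (w,es)\<in>R) \<and> (\<forall>f\<in>E. (es,f)\<in>R \<and> f\<noteq>es \<longrightarrow> f \<notin> C) \<and>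
        (\<forall>e\<in>E. \<forall>f\<in>E. (f,e)\<in>R \<and> (e,es)\<in>R \<longrightarrow> card f \<ge> card e)))"
      ..
    have R: "linear_order_on E R" "\<forall>e\<in>E-C. real (back_deg E R e) \<le> t"
      "C \<noteq> {} \<longrightarrow> (\<exists>es\<in>C. (\<forall>w\<in>C. (w,es)\<in>R) \<and> (\<forall>f\<in>E. (es,f)\<in>R \<and> f\<noteq>es \<longrightarrow> f \<notin> C) \<and>
        (\<forall>e\<in>E. \<forall>f\<in>E. (f,e)\<in>R \<and> (e,es)\<in>R \<longrightarrow> card f \<ge> card e))"
      using R0 by simp_all
    show "\<exists>R. linear_order_on E R \<and>
        ((\<forall>e\<in>E. real (back_deg E R e) \<le> (1 - \<tau>) * real (card V)) \<or>
         (\<exists>W. W \<subseteq> E \<and> W \<noteq> {} \<and>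
            real (Max (card ` W)) \<le> (1 + \<delta>) * real (Min (card ` W)) \<and>
            vol (card V) W \<ge> c / (1 + \<delta>) \<and>
            (\<exists>estar\<in>W. (\<forall>w\<in>W. (w, estar) \<in> R) \<and>
              (\<forall>f\<in>E. (estar, f) \<in> R \<and> f \<noteq> estar \<longrightarrow>
                  real (back_deg E R f) \<le> (1 - \<tau>) * real (card V)) \<and>
              (\<forall>e\<in>E. \<forall>f\<in>E. (f, e) \<in> R \<and> (e, estar) \<in> R \<longrightarrow> card f \<ge> card e))))"
    proof (cases "C = {}")
      case True
      have "\<forall>e\<in>E. real (back_deg E R e) \<le> (1 - \<tau>) * real (card V)"
        using R(2) True unfolding t_def n_def by simp
      then show ?thesis using R(1) by blast
    next
      case False
      from mp[OF R(3) False] obtain es where es1: "es \<in> C" and es0: "(\<forall>w\<in>C. (w,es)\<in>R) \<and> (\<forall>f\<in>E. (es,f)\<in>R \<and> f\<noteq>es \<longrightarrow> f \<notin> C) \<and>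
        (\<forall>e\<in>E. \<forall>f\<in>E. (f,e)\<in>R \<and> (e,es)\<in>R \<longrightarrow> card f \<ge> card e)" ..
      have es: "es \<in> C" "\<forall>w\<in>C. (w,es)\<in>R" "\<forall>f\<in>E. (es,f)\<in>R \<and> f\<noteq>es \<longrightarrow> f \<notin> C"
        "\<forall>e\<in>E. \<forall>f\<in>E. (f,e)\<in>R \<and> (e,es)\<in>R \<longrightarrow> card f \<ge> card e" using es0 es1 by simp_all
      have esE: "es \<in> E" using es(1) P(1) by auto
      have reflR: "(es, es) \<in> R" using R(1) esE
        unfolding linear_order_on_def partial_order_on_def preorder_on_def refl_on_def by auto
      have minC: "\<forall>f\<in>C. card es \<le> card f"
        using es(2,4) reflR P(1) esE by blast
      define k where "k = card es"
      have kr: "real k \<ge> 1 + 1/(1-\<tau>) + 2*(1+\<delta>)^2/g"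
      proof -
        have "real r0 \<ge> 1 + 1/(1-\<tau>) + 2*(1+\<delta>)^2/g" unfolding r0_def by linarith
        moreover have "real r1 \<ge> real r0" using r1 by simp
        moreover have "real k \<ge> real r1" using big esE unfolding k_def by simp
        ultimately show ?thesis by linarith
      qed
      have t1: "1 - \<tau> > 0" using assms(2) by simp
      have g2: "2*(1+\<delta>)^2/g \<ge> 0" using g0 by simp
      have kt: "(real k - 1)*(1-\<tau>) \<ge> 1"
      proof -
        have "real k - 1 \<ge> 1/(1-\<tau>)" using kr g2 by linarith
        then have "(real k - 1)*(1-\<tau>) \<ge> 1/(1-\<tau>) * (1-\<tau>)" using t1 by (intro mult_right_mono) auto
        then show ?thesis using t1 by simp
      qed
      have k2: "real k \<ge> 2"
      proof -
        have "1/(1-\<tau>) \<ge> 1" using t1 assms(1) by (simp add: field_simps)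
        then show ?thesis using kr g2 by linarith
      qed
      have keps: "(1+\<delta>)^2 * (2 / real k) \<le> g"
      proof -
        have "real k \<ge> 2*(1+\<delta>)^2/g" using kr t1 by (smt (verit) divide_pos_pos)
        then have "real k * g \<ge> 2*(1+\<delta>)^2" using g0 by (simp add: field_simps)
        then show ?thesis using k2 by (simp add: field_simps)
      qed
      define W where "W = {f\<in>C. real (card f) \<le> (1+\<delta>)*real k}"
      have esW: "es \<in> W" unfolding W_def using es(1) d0 k2 by (simp add: k_def algebra_simps)
      have WE: "W \<subseteq> E" using P(1) W_def by auto
      have finW: "finite W" using finE WE finite_subset by auto
      define S where "S = (\<Sum>w\<in>V. real (card (Dg C w)))"
      define T where "T = (\<Sum>f\<in>W. real (card f) * (real (card f) - 1))"
      have k1: "k \<ge> 1" using k2 by simp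
      have m2: "\<delta> * T \<ge> (1+\<delta>)*(real k - 1)*S - real n * (real n - 1)"
        using M2[OF lin P(1) d0 k1 _ W_def] minC unfolding T_def S_def n_def k_def by auto
      have m1: "(real k - 1) * S \<ge> real n * (real n - 1) * ((1-\<tau>)^2 - 2/real k)"
        using M1[OF lin P(1) es(1) minC _ _ _ kt[unfolded k_def]] P(4) assms(1,2)
        unfolding S_def n_def k_def t_def by auto
      have nk: "n \<ge> k" unfolding n_def k_def
        using lin_fin(1,3)[OF lin] esE by (simp add: card_mono)
      define N where "N = real n * (real n - 1)"
      have N0: "N > 0" unfolding N_def using nk k2 by simp
      have volW: "vol (card V) W = T / N"
      proof -
        have A: "(\<Sum>e\<in>W. real (card e choose 2)) = T / 2"
          unfolding T_def choose2_real by (simp add: sum_divide_distrib)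
        have B: "real (card V choose 2) = N / 2" unfolding N_def n_def choose2_real by simp
        show ?thesis unfolding vol_def A B by simp
      qed
      have main: "(1+\<delta>) * T \<ge> N * c"
      proof -
        have "(1+\<delta>)*((real k - 1) * S) \<ge> (1+\<delta>)*(N * ((1-\<tau>)^2 - 2/real k))"
          using m1 d0 unfolding N_def by (intro mult_left_mono) auto
        moreover have "(1+\<delta>)*(real k - 1)*S = (1+\<delta>)*((real k - 1)*S)" by simp
        moreover have "N * ((1+\<delta>)*((1-\<tau>)^2 - 2/real k) - 1) = (1+\<delta>)*(N * ((1-\<tau>)^2 - 2/real k)) - N"
          by (simp add: algebra_simps)
        ultimately have "\<delta> * T \<ge> N * ((1+\<delta>)*((1-\<tau>)^2 - 2/real k) - 1)"
          using m2 unfolding N_def[symmetric] by linarith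
        then have "(1+\<delta>) * (\<delta> * T) \<ge> (1+\<delta>) * (N * ((1+\<delta>)*((1-\<tau>)^2 - 2/real k) - 1))"
          using d0 by (intro mult_left_mono) auto
        moreover have "(1+\<delta>) * (N * ((1+\<delta>)*((1-\<tau>)^2 - 2/real k) - 1)) =
            N * (g + \<delta> * c - (1+\<delta>)^2 * (2 / real k))"
          unfolding g_def by (simp add: algebra_simps power2_eq_square add_divide_distrib)
        moreover have "N * (g + \<delta> * c - (1+\<delta>)^2 * (2 / real k)) \<ge> N * (\<delta> * c)"
          using keps N0 by (intro mult_left_mono) auto
        ultimately have "\<delta> * ((1+\<delta>) * T) \<ge> \<delta> * (N * c)" by (simp add: algebra_simps)
        then show ?thesis using d0 by simp
      qed
      have volc: "vol (card V) W \<ge> c / (1 + \<delta>)"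
        unfolding volW using main N0 d0 by (simp add: field_simps)
      have minW: "Min (card ` W) = k"
        using esW finW minC unfolding W_def k_def by (intro Min_eqI) auto
      have maxW: "real (Max (card ` W)) \<le> (1+\<delta>) * real k"
      proof -
        have "Max (card ` W) \<in> card ` W" using finW esW by (intro Max_in) auto
        then show ?thesis unfolding W_def by auto
      qed
      show ?thesis
      proof (rule exI[of _ R], intro conjI disjI2)
        show "linear_order_on E R" by (rule R(1))
        show "\<exists>W. W \<subseteq> E \<and> W \<noteq> {} \<and>
            real (Max (card ` W)) \<le> (1 + \<delta>) * real (Min (card ` W)) \<and>
            vol (card V) W \<ge> c / (1 + \<delta>) \<and>
            (\<exists>estar\<in>W. (\<forall>w\<in>W. (w, estar) \<in> R) \<and>
              (\<forall>f\<in>E. (estar, f) \<in> R \<and> f \<noteq> estar \<longrightarrow>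
                  real (back_deg E R f) \<le> (1 - \<tau>) * real (card V)) \<and>
              (\<forall>e\<in>E. \<forall>f\<in>E. (f, e) \<in> R \<and> (e, estar) \<in> R \<longrightarrow> card f \<ge> card e))"
        proof (rule exI[of _ W], intro conjI)
          show "W \<subseteq> E" by (rule WE)
          show "W \<noteq> {}" using esW by auto
          show "real (Max (card ` W)) \<le> (1 + \<delta>) * real (Min (card ` W))" using maxW minW by simp
          show "vol (card V) W \<ge> c / (1 + \<delta>)" by (rule volc)
          show "\<exists>estar\<in>W. (\<forall>w\<in>W. (w, estar) \<in> R) \<and>
              (\<forall>f\<in>E. (estar, f) \<in> R \<and> f \<noteq> estar \<longrightarrow>
                  real (back_deg E R f) \<le> (1 - \<tau>) * real (card V)) \<and>
              (\<forall>e\<in>E. \<forall>f\<in>E. (f, e) \<in> R \<and> (e, estar) \<in> R \<longrightarrow> card f \<ge> card e)"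
          proof (rule bexI[OF _ esW], intro conjI)
            show "\<forall>w\<in>W. (w, es) \<in> R" using es(2) W_def by auto
            show "\<forall>f\<in>E. (es, f) \<in> R \<and> f \<noteq> es \<longrightarrow> real (back_deg E R f) \<le> (1 - \<tau>) * real (card V)"
              using es(3) R(2) unfolding t_def n_def by blast
            show "\<forall>e\<in>E. \<forall>f\<in>E. (f, e) \<in> R \<and> (e, es) \<in> R \<longrightarrow> card f \<ge> card e" by (rule es(4))
          qed
        qed
      qed
    qed
  qed
qed

end
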